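(* Let $\rho:\{C,V\}^*\to\{C,V\}^*$ be the rhythmic syncope function. Then for every $i,j>0$ and every tier $\tau$ on $\{C,V\}$, the function $\rho$ is not $i,j$-input--output strictly local on tier $\tau$.
   Context: Strings: $\lambda$ is the empty string; $\rtimes$ is a left word-boundary symbol not in any alphabet considered. For $k\ge 0$ and a string $x$, $\mathrm{suff}^k(x)$ is the string consisting of the last $k$ symbols of $\rtimes^k x$. The longest common prefix of a set of strings $A$ is denoted $\mathrm{lcp}(A)$. Rhythmic syncope: every $x\in\{C,V\}^*$ can be written uniquely as $c_0Vc_1Vc_2\cdots Vc_n$ with $c_0,\dots,c_n\in C^*$; then $\rho(c_0Vc_1V\cdots Vc_n)=c_0v_1c_1v_2c_2\cdots v_nc_n$, where $v_m=V$ if $m$ is even and $v_m=\lambda$ if $m$ is odd. For $f:\Sigma^*\to\Gamma^*$ ($\Sigma,\Gamma$ finite alphabets), $f^{\gets}(x):=\mathrm{lcp}(\{f(xy)\mid y\in\Sigma^*\})$, and for $x\in\Sigma^*$ the translation $f^{\to}_x:\Sigma^*\to\Gamma^*$ is defined by $f(xy)=f^{\gets}(x)f^{\to}_x(y)$. A tier on an alphabet $A$ is a homomorphism $\tau:A^*\to A^*$ such that for each $a\in A$, either $\tau(a)=a$ or $\tau(a)=\lambda$. Given $i,j>0$ and a tier $\tau$ on $\Sigma\cup\Gamma$, $f$ is $i,j$-input--output strictly local on tier $\tau$ ($i,j$-TIOSL) if for all $w,x\in\Sigma^*$: whenever $\mathrm{suff}^{i-1}(\tau(w))=\mathrm{suff}^{i-1}(\tau(x))$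 and $\mathrm{suff}^{j-1}(\tau(f^{\gets}(w)))=\mathrm{suff}^{j-1}(\tau(f^{\gets}(x)))$, we have $f^{\to}_w=f^{\to}_x$. *)

theory Defs
  imports Main "HOL-Library.Sublist"
begin

datatype cv = C | V

text \<open>The boundary symbol is None; genuine symbols are wrapped in Some.
  suff k x = last k symbols of (boundary^k) x.\<close>
definition suff :: "nat \<Rightarrow> 'a list \<Rightarrow> 'a option list" where
  "suff k x = (let w = replicate k None @ map Some x in drop (length w - k) w)"

definition lcp :: "'a list set \<Rightarrow> 'a list" where
  "lcp A = Longest_common_prefix A"

definition fwd :: "('a list \<Rightarrow> 'b list) \<Rightarrow> 'a list \<Rightarrow> 'b list" where
  "fwd f x = lcp {f (x @ y) | y. True}"

text \<open>Translation: f (x @ y) = fwd f x @ trans f x y.\<close>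
definition trans_fun :: "('a list \<Rightarrow> 'b list) \<Rightarrow> 'a list \<Rightarrow> 'a list \<Rightarrow> 'b list" where
  "trans_fun f x y = drop (length (fwd f x)) (f (x @ y))"

definition is_tier :: "('a list \<Rightarrow> 'a list) \<Rightarrow> bool" where
  "is_tier \<tau> \<longleftrightarrow> \<tau> [] = [] \<and> (\<forall>u w. \<tau> (u @ w) = \<tau> u @ \<tau> w)
     \<and> (\<forall>a. \<tau> [a] = [a] \<or> \<tau> [a] = [])"

definition TIOSL :: "nat \<Rightarrow> nat \<Rightarrow> ('a list \<Rightarrow> 'a list) \<Rightarrow> ('a list \<Rightarrow> 'a list) \<Rightarrow> bool" where
  "TIOSL i j \<tau> f \<longleftrightarrow> (\<forall>w x.
     suff (i - 1) (\<tau> w) = suff (i - 1) (\<tau> x) \<and>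
     suff (j - 1) (\<tau> (fwd f w)) = suff (j - 1) (\<tau> (fwd f x))
     \<longrightarrow> trans_fun f w = trans_fun f x)"

text \<open>Rhythmic syncope: the m-th V is kept iff m is even.
  The boolean flag says whether the next V is kept.\<close>
fun rho_aux :: "bool \<Rightarrow> cv list \<Rightarrow> cv list" where
  "rho_aux b [] = []"
| "rho_aux b (C # xs) = C # rho_aux b xs"
| "rho_aux b (V # xs) = (if b then [V] else []) @ rho_aux (\<not> b) xs"

definition rho :: "cv list \<Rightarrow> cv list" where
  "rho x = rho_aux False x"

end

theory Submission
  imports Defs
begin

lemma rho_aux_prefix: "prefix (rho_aux b w) (rho_aux b (w @ y))"
proof (induction w arbitrary: b)
  case Nil then show ?case by simp
next
  case (Cons a w) then show ?case by (cases a; cases b) auto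
qed

lemma fwd_rho: "fwd rho w = rho w"
  unfolding fwd_def lcp_def
proof (rule Longest_common_prefix_eq)
  show "{rho (w @ y) |y. True} \<noteq> {}" by blast
  show "\<forall>xs\<in>{rho (w @ y) |y. True}. prefix (rho w) xs"
    unfolding rho_def using rho_aux_prefix by blast
  show "\<forall>qs. (\<forall>xs\<in>{rho (w @ y) |y. True}. prefix qs xs) \<longrightarrow> length qs \<le> length (rho w)"
  proof (intro allI impI)
    fix qs assume "\<forall>xs\<in>{rho (w @ y) |y. True}. prefix qs xs"
    then have "prefix qs (rho (w @ []))" by blast
    then show "length qs \<le> length (rho w)" by (simp add: prefix_length_le)
  qed
qed

lemma rho_even: "rho_aux False (replicate (2*k) V @ y) = replicate k V @ rho_aux False y"
  by (induction k) (auto simp: numeral_2_eq_2)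

lemma rho_V_even: "rho (replicate (2*k) V) = replicate k V"
  using rho_even[of k "[]"] by (simp add: rho_def)

lemma rep_odd: "replicate (2*k+1) V = replicate (2*k) V @ [V]"
  by (simp add: replicate_append_same)

lemma rho_V_odd: "rho (replicate (2*k+1) V) = replicate k V"
  unfolding rep_odd using rho_even[of k "[V]"] by (simp add: rho_def)

lemma rho_V_odd2: "rho (replicate (2*k+1) V @ [V]) = replicate (Suc k) V"
proof -
  have e: "replicate (2*k+1) V @ [V] = replicate (2*k) V @ [V,V]"
    unfolding rep_odd by simp
  have "rho_aux False (replicate (2*k) V @ [V,V]) = replicate k V @ [V]"
    using rho_even[of k "[V,V]"] by simp
  also have "\<dots> = replicate (Suc k) V" by (simp add: replicate_append_same)
  finally show ?thesis unfolding rho_def e .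
qed

lemma tier_rep:
  assumes "is_tier \<tau>" "\<tau> [V] = [V]"
  shows "\<tau> (replicate n V) = replicate n V"
proof (induction n)
  case 0 then show ?case using assms(1) by (simp add: is_tier_def)
next
  case (Suc n)
  have "\<tau> ([V] @ replicate n V) = \<tau> [V] @ \<tau> (replicate n V)"
    using assms(1) unfolding is_tier_def by (metis)
  then show ?case using Suc assms(2) by (metis append_Cons append_Nil replicate_Suc)
qed

lemma suff_rep:
  assumes "k \<le> n"
  shows "suff k (replicate n a) = replicate k (Some a)"
  using assms by (simp add: suff_def Let_def)

theorem proposition10:
  fixes i j :: nat and \<tau> :: "cv list \<Rightarrow> cv list"
  assumes "i > 0" and "j > 0" and "is_tier \<tau>"
  shows "\<not> TIOSL i j \<tau> rho"
proof
  assume T: "TIOSL i j \<tau> rho"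
  have tr: "\<tau> [V] = [V] \<or> \<tau> [V] = []" using assms(3) by (simp add: is_tier_def)
  have t0: "\<tau> [] = []" using assms(3) by (simp add: is_tier_def)
  show False
  proof (cases "\<tau> [V] = []")
    case True
    have r1: "rho [V] = []" by (simp add: rho_def)
    have "trans_fun rho [] = trans_fun rho [V]"
      using T unfolding TIOSL_def fwd_rho
      using True t0 r1 by (metis rho_def rho_aux.simps(1))
    then have "trans_fun rho [] [V] = trans_fun rho [V] [V]" by simp
    moreover have "trans_fun rho [] [V] = []"
      by (simp add: trans_fun_def fwd_rho rho_def)
    moreover have "trans_fun rho [V] [V] = [V]"
      by (simp add: trans_fun_def fwd_rho rho_def)
    ultimately show False by simp
  next
    case False
    then have tv: "\<tau> [V] = [V]" using tr by simp
    define k where "k = i + j"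
    define w where "w = replicate (2*k) V"
    define x where "x = replicate (2*k+1) V"
    have "suff (i - 1) (\<tau> w) = suff (i - 1) (\<tau> x)"
      unfolding w_def x_def tier_rep[OF assms(3) tv]
      by (simp add: suff_rep k_def del: replicate.simps)
    moreover have "suff (j - 1) (\<tau> (fwd rho w)) = suff (j - 1) (\<tau> (fwd rho x))"
      unfolding w_def x_def fwd_rho rho_V_even rho_V_odd by simp
    ultimately have "trans_fun rho w = trans_fun rho x"
      using T unfolding TIOSL_def by blast
    then have "trans_fun rho w [V] = trans_fun rho x [V]" by simp
    moreover have "trans_fun rho w [V] = []"
      unfolding trans_fun_def fwd_rho w_def rep_odd[symmetric] rho_V_odd rho_V_even by simp
    moreover have "trans_fun rho x [V] = [V]"
      unfolding trans_fun_def fwd_rho x_def rho_V_odd rho_V_odd2 by (simp add: replicate_append_same[symmetric])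
    ultimately show False by simp
  qed
qed

end
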